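(* Let $G$ be a finite cavity-monotone network and $t>0$. Then the cavity equation $\mathbf x=t\Gamma_G(\mathbf x)$ admits a unique solution $\mathbf x(t)\in[0,\infty)^{\vec E}$, and it is globally attractive: for every initial configuration $\mathbf x^0\in[0,\infty)^{\vec E}$, the iterates $(t\Gamma_G)^k(\mathbf x^0)$ converge to $\mathbf x(t)$ as $k\to\infty$.
   Context: Measures over subsets: for a finite set $E$, a measure is $\mu:2^E\to[0,\infty)$; $Z(\mathbf w)=\sum_{F\subseteq E}\mu(F)\mathbf w^F$, $\mathbf w^F=\prod_{e\in F}w_e$; the cavity ratio is $\Gamma^e_\mu(\mathbf w')=Z^{/e}(\mathbf w')/Z^{\setminus e}(\mathbf w')$ where $Z^{\setminus e}(\mathbf w')=\sum_{F\not\ni e}\mu(F)\mathbf w'^F$, $Z^{/e}(\mathbf w')=\sum_{F\not\ni e}\mu(F\cup\{e\})\mathbf w'^F$; for $\mathbf w\in[0,\infty)^E$ with $Z(\mathbf w)>0$, $\mathbb P^{\mathbf w}_\mu(\mathcal F=F)=\mu(F)\mathbf w^F/Z(\mathbf w)$ and $U_\mu(\mathbf w)=\mathbb E^{\mathbf w}_\mu|\mathcal F|$. $\mu$ is Rayleigh if for all $\mathbf w\in(0,\infty)^E$, $e\neq f$: $\mathbb P^{\mathbf w}_\mu(e,f\in\mathcal F)\le\mathbb P^{\mathbf w}_\mu(e\in\mathcal F)\mathbb P^{\mathbf w}_\mu(f\in\mathcal F)$; size-increasing if for all $\mathbf w\in(0,\infty)^E$, $e\in E$: $\mathbb E^{\mathbf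 w}_\mu[|\mathcal F|\mathbf 1_{e\in\mathcal F}]>\mathbb E^{\mathbf w}_\mu|\mathcal F|\,\mathbb P^{\mathbf w}_\mu(e\in\mathcal F)$; cavity-monotone if $\mu(\emptyset)>0$, Rayleigh and size-increasing. Networks: a network is a simple locally finite graph $G=(V,E)$ with, for each $i\in V$, a local measure $\mu_i$ over the subsets of $E_i$ (edges incident to $i$); it is cavity-monotone if every $\mu_i$ is. $\partial i$ is the set of neighbours of $i$. A configuration is $\mathbf x=(x_{i\to j})\in[0,\infty)^{\vec E}$ indexed by oriented edges. The cavity operator is $\Gamma_G(\mathbf x)=\mathbf y$ with $y_{i\to j}=\Gamma^{ij}_{\mu_i}(x_{k\to i}:k\in\partial i\setminus\{j\})$ (the variable of $\mu_i$ attached to edge $ik$ being set to $x_{k\to i}$). The cavity equation at activity $t>0$ is $\mathbf x=t\Gamma_G(\mathbf x)$. *)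

theory Defs
  imports "HOL-Analysis.Analysis"
begin

definition measure_on :: "('e set \<Rightarrow> real) \<Rightarrow> 'e set \<Rightarrow> bool" where
  "measure_on mu E \<longleftrightarrow> finite E \<and> (\<forall>F. F \<subseteq> E \<longrightarrow> mu F \<ge> 0)"

definition Zpart :: "('e set \<Rightarrow> real) \<Rightarrow> 'e set \<Rightarrow> ('e \<Rightarrow> real) \<Rightarrow> real" where
  "Zpart mu E w = (\<Sum>F\<in>Pow E. mu F * (\<Prod>e\<in>F. w e))"

definition Expect :: "('e set \<Rightarrow> real) \<Rightarrow> 'e set \<Rightarrow> ('e \<Rightarrow> real) \<Rightarrow> ('e set \<Rightarrow> real) \<Rightarrow> real" where
  "Expect mu E w g = (\<Sum>F\<in>Pow E. g F * (mu F * (\<Prod>e\<in>F. w e) / Zpart mu E w))"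

definition rayleigh :: "('e set \<Rightarrow> real) \<Rightarrow> 'e set \<Rightarrow> bool" where
  "rayleigh mu E \<longleftrightarrow>
     (\<forall>w. (\<forall>e\<in>E. w e > 0) \<longrightarrow>
        (\<forall>e\<in>E. \<forall>f\<in>E. e \<noteq> f \<longrightarrow>
           Expect mu E w (\<lambda>F. of_bool (e \<in> F \<and> f \<in> F))
             \<le> Expect mu E w (\<lambda>F. of_bool (e \<in> F)) * Expect mu E w (\<lambda>F. of_bool (f \<in> F))))"

definition size_increasing :: "('e set \<Rightarrow> real) \<Rightarrow> 'e set \<Rightarrow> bool" where
  "size_increasing mu E \<longleftrightarrow>
     (\<forall>w. (\<forall>e\<in>E. w e > 0) \<longrightarrow>
        (\<forall>e\<in>E.
           Expect mu E w (\<lambda>F. real (card F) * of_bool (e \<in> F))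
             > Expect mu E w (\<lambda>F. real (card F)) * Expect mu E w (\<lambda>F. of_bool (e \<in> F))))"

definition cavity_monotone :: "('e set \<Rightarrow> real) \<Rightarrow> 'e set \<Rightarrow> bool" where
  "cavity_monotone mu E \<longleftrightarrow>
     measure_on mu E \<and> mu {} > 0 \<and> rayleigh mu E \<and> size_increasing mu E"

definition cavity_ratio :: "('e set \<Rightarrow> real) \<Rightarrow> 'e set \<Rightarrow> 'e \<Rightarrow> ('e \<Rightarrow> real) \<Rightarrow> real" where
  "cavity_ratio mu E e w =
     (\<Sum>F\<in>Pow (E - {e}). mu (insert e F) * (\<Prod>a\<in>F. w a))
     / (\<Sum>F\<in>Pow (E - {e}). mu F * (\<Prod>a\<in>F. w a))"

definition finite_simple_graph :: "'v set \<Rightarrow> 'v set set \<Rightarrow> bool" where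
  "finite_simple_graph V E \<longleftrightarrow>
     finite V \<and> (\<forall>e\<in>E. \<exists>i j. i \<in> V \<and> j \<in> V \<and> i \<noteq> j \<and> e = {i, j})"

definition incident :: "'v set set \<Rightarrow> 'v \<Rightarrow> 'v set set" where
  "incident E i = {e \<in> E. i \<in> e}"

definition arcs :: "'v set set \<Rightarrow> ('v \<times> 'v) set" where
  "arcs E = {(i, j). {i, j} \<in> E}"

definition other_end :: "'v \<Rightarrow> 'v set \<Rightarrow> 'v" where
  "other_end i e = (THE k. e = {i, k})"

definition configs :: "'v set set \<Rightarrow> ('v \<times> 'v \<Rightarrow> real) set" where
  "configs E = {x. (\<forall>a\<in>arcs E. x a \<ge> 0) \<and> (\<forall>a. a \<notin> arcs E \<longrightarrow> x a = 0)}"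

text \<open>Cavity operator: y_{i->j} = Gamma^{ij}_{mu_i}(x_{k->i} : k in di - {j}),
  the variable of mu_i at edge ik being x_{k->i}.\<close>
definition cavity_op :: "'v set set \<Rightarrow> ('v \<Rightarrow> 'v set set \<Rightarrow> real)
    \<Rightarrow> ('v \<times> 'v \<Rightarrow> real) \<Rightarrow> ('v \<times> 'v \<Rightarrow> real)" where
  "cavity_op E mu x = (\<lambda>(i, j).
     if (i, j) \<in> arcs E
     then cavity_ratio (mu i) (incident E i) {i, j} (\<lambda>e. x (other_end i e, i))
     else 0)"

definition scaled_cavity_op :: "real \<Rightarrow> 'v set set \<Rightarrow> ('v \<Rightarrow> 'v set set \<Rightarrow> real)
    \<Rightarrow> ('v \<times> 'v \<Rightarrow> real) \<Rightarrow> ('v \<times> 'v \<Rightarrow> real)" where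
  "scaled_cavity_op t E mu x = (\<lambda>a. t * cavity_op E mu x a)"

end

theory Submission
  imports Defs
begin


lemma sum_Pow_insert:
  assumes "finite S" "x \<notin> S"
  shows "(\<Sum>F\<in>Pow (insert x S). \<phi> F) = (\<Sum>F\<in>Pow S. \<phi> F) + (\<Sum>F\<in>Pow S. \<phi> (insert x F))"
proof -
  have "Pow (insert x S) = Pow S \<union> insert x ` Pow S" by (rule Pow_insert)
  moreover have "Pow S \<inter> insert x ` Pow S = {}" using assms by auto
  moreover have "inj_on (insert x) (Pow S)" using assms unfolding inj_on_def
    by (metis PowD insert_ident subsetD)
  ultimately show ?thesis using assms by (simp add: sum.union_disjoint sum.reindex)
qed

lemma sum_Pow_insert2:
  assumes "finite S" "x \<notin> S" "y \<notin> S" "x \<noteq> y"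
  shows "(\<Sum>F\<in>Pow (insert x (insert y S)). \<phi> F) = (\<Sum>F\<in>Pow S. \<phi> F) + (\<Sum>F\<in>Pow S. \<phi> (insert y F))
     + (\<Sum>F\<in>Pow S. \<phi> (insert x F)) + (\<Sum>F\<in>Pow S. \<phi> (insert x (insert y F)))"
  using assms by (simp add: sum_Pow_insert add.assoc)



lemma Expect_eq: "Expect mu E w g = (\<Sum>F\<in>Pow E. g F * mu F * (\<Prod>e\<in>F. w e)) / Zpart mu E w"
  unfolding Expect_def by (simp add: sum_divide_distrib mult.assoc)

lemma Bsum_ge:
  assumes "measure_on mu Ei" "S \<subseteq> Ei" "\<forall>a\<in>S. w a \<ge> 0"
  shows "(\<Sum>F\<in>Pow S. mu F * (\<Prod>a\<in>F. w a)) \<ge> mu {}"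
proof -
  have fin: "finite S" using assms(1,2) unfolding measure_on_def by (meson finite_subset)
  have "mu {} * (\<Prod>a\<in>{}. w a) \<le> (\<Sum>F\<in>Pow S. mu F * (\<Prod>a\<in>F. w a))"
  proof (rule member_le_sum)
    show "{} \<in> Pow S" by simp
    show "finite (Pow S)" using fin by simp
    fix F assume "F \<in> Pow S - {{}}"
    then have "F \<subseteq> Ei" "\<forall>a\<in>F. w a \<ge> 0" using assms by auto
    then show "0 \<le> mu F * (\<Prod>a\<in>F. w a)" using assms(1) unfolding measure_on_def
      by (simp add: prod_nonneg)
  qed
  then show ?thesis by simp
qed

lemma Asum_nonneg:
  assumes "measure_on mu Ei" "e \<in> Ei" "S \<subseteq> Ei" "\<forall>a\<in>S. w a \<ge> 0"
  shows "(\<Sum>F\<in>Pow S. mu (insert e F) * (\<Prod>a\<in>F. w a)) \<ge> 0"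
proof (rule sum_nonneg)
  fix F assume "F \<in> Pow S"
  then have "insert e F \<subseteq> Ei" "\<forall>a\<in>F. w a \<ge> 0" using assms by auto
  then show "0 \<le> mu (insert e F) * (\<Prod>a\<in>F. w a)" using assms(1) unfolding measure_on_def
    by (simp add: prod_nonneg)
qed

lemma sum_mu_nonneg:
  assumes "measure_on mu Ei" "\<forall>F\<in>Pow S. h F \<subseteq> Ei" "\<forall>a\<in>S. w a \<ge> 0"
  shows "(\<Sum>F\<in>Pow S. mu (h F) * (\<Prod>a\<in>F. w a)) \<ge> 0"
proof (rule sum_nonneg)
  fix F assume F: "F \<in> Pow S"
  then have "h F \<subseteq> Ei" "\<forall>a\<in>F. w a \<ge> 0" using assms by auto
  then show "0 \<le> mu (h F) * (\<Prod>a\<in>F. w a)" using assms(1) unfolding measure_on_def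
    by (simp add: prod_nonneg)
qed

lemma coord_mono:
  assumes cm: "cavity_monotone mu Ei" and e: "e \<in> Ei" and f: "f \<in> Ei" "f \<noteq> e"
    and wpos: "\<forall>a\<in>Ei-{e}. w a > 0" and s: "0 < s" "s \<le> s'"
  shows "cavity_ratio mu Ei e (w(f:=s')) \<le> cavity_ratio mu Ei e (w(f:=s))"
proof -
  have ms: "measure_on mu Ei" and m0: "mu {} > 0" and ray: "rayleigh mu Ei"
    using cm unfolding cavity_monotone_def by auto
  have finE: "finite Ei" using ms unfolding measure_on_def by auto
  define R where "R = Ei - {e} - {f}"
  have finR: "finite R" using finE R_def by auto
  have eR: "e \<notin> R" and fR: "f \<notin> R" using R_def by auto
  have Ee: "Ei - {e} = insert f R" using R_def f by auto
  have Ei: "Ei = insert e (insert f R)" using R_def f e by auto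
  define pi where "pi F = (\<Prod>a\<in>F. w a)" for F
  define c0 where "c0 = (\<Sum>F\<in>Pow R. mu F * pi F)"
  define cf where "cf = (\<Sum>F\<in>Pow R. mu (insert f F) * pi F)"
  define ce where "ce = (\<Sum>F\<in>Pow R. mu (insert e F) * pi F)"
  define cef where "cef = (\<Sum>F\<in>Pow R. mu (insert e (insert f F)) * pi F)"
  have wR: "\<forall>a\<in>R. w a > 0" using wpos R_def by auto
  have wR0: "\<forall>a\<in>R. w a \<ge> 0" using wR by auto
  have RE: "R \<subseteq> Ei" using R_def by auto
  have c0: "c0 \<ge> mu {}" unfolding c0_def pi_def
    by (rule Bsum_ge[OF ms]) (use wR0 RE in auto)
  have cf: "cf \<ge> 0" unfolding cf_def pi_def
    by (rule Asum_nonneg[OF ms f(1)]) (use wR0 RE in auto)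
  have ce: "ce \<ge> 0" unfolding ce_def pi_def
    by (rule Asum_nonneg[OF ms e]) (use wR0 RE in auto)
  have pi_f: "(\<Prod>a\<in>F. (w(f:=s)) a) = pi F" if "F \<in> Pow R" for F s
    unfolding pi_def using that fR by (intro prod.cong) auto
  have pi_f2: "(\<Prod>a\<in>insert f F. (w(f:=s)) a) = s * pi F" if "F \<in> Pow R" for F s
  proof -
    have "finite F" "f \<notin> F" using that finR fR finite_subset by auto
    then show ?thesis using pi_f[OF that] by simp
  qed
  have AB: "cavity_ratio mu Ei e (w(f:=s)) = (ce + s * cef) / (c0 + s * cf)" for s
  proof -
    have "(\<Sum>F\<in>Pow (Ei-{e}). mu (insert e F) * (\<Prod>a\<in>F. (w(f:=s)) a)) =
      (\<Sum>F\<in>Pow R. mu (insert e F) * (\<Prod>a\<in>F. (w(f:=s)) a)) +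
      (\<Sum>F\<in>Pow R. mu (insert e (insert f F)) * (\<Prod>a\<in>insert f F. (w(f:=s)) a))"
      unfolding Ee by (rule sum_Pow_insert[OF finR fR])
    also have "\<dots> = ce + s * cef"
      unfolding ce_def cef_def sum_distrib_left
      by (intro arg_cong2[where f="(+)"] sum.cong refl) (simp_all only: pi_f pi_f2 mult_ac)
    finally have 1: "(\<Sum>F\<in>Pow (Ei-{e}). mu (insert e F) * (\<Prod>a\<in>F. (w(f:=s)) a)) = ce + s * cef" .
    have "(\<Sum>F\<in>Pow (Ei-{e}). mu F * (\<Prod>a\<in>F. (w(f:=s)) a)) =
      (\<Sum>F\<in>Pow R. mu F * (\<Prod>a\<in>F. (w(f:=s)) a)) +
      (\<Sum>F\<in>Pow R. mu (insert f F) * (\<Prod>a\<in>insert f F. (w(f:=s)) a))"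
      unfolding Ee by (rule sum_Pow_insert[OF finR fR])
    also have "\<dots> = c0 + s * cf"
      unfolding c0_def cf_def sum_distrib_left
      by (intro arg_cong2[where f="(+)"] sum.cong refl) (simp_all only: pi_f pi_f2 mult_ac)
    finally have 2: "(\<Sum>F\<in>Pow (Ei-{e}). mu F * (\<Prod>a\<in>F. (w(f:=s)) a)) = c0 + s * cf" .
    show ?thesis unfolding cavity_ratio_def 1 2 ..
  qed
  define v where "v a = (if a = e \<or> a = f then 1 else w a)" for a
  have vpos: "\<forall>a\<in>Ei. v a > 0" using wpos v_def by auto
  have piv: "(\<Prod>a\<in>F. v a) = pi F" "(\<Prod>a\<in>insert f F. v a) = pi F"
     "(\<Prod>a\<in>insert e F. v a) = pi F" "(\<Prod>a\<in>insert e (insert f F). v a) = pi F"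
    if "F \<in> Pow R" for F
  proof -
    have F: "finite F" "f \<notin> F" "e \<notin> F" using that finR fR eR finite_subset by auto
    have "(\<Prod>a\<in>F. v a) = pi F" unfolding pi_def v_def using F by (intro prod.cong) auto
    then show "(\<Prod>a\<in>F. v a) = pi F" "(\<Prod>a\<in>insert f F. v a) = pi F"
     "(\<Prod>a\<in>insert e F. v a) = pi F" "(\<Prod>a\<in>insert e (insert f F). v a) = pi F"
      using F f by (auto simp: v_def)
  qed
  have N: "(\<Sum>F\<in>Pow Ei. g F * mu F * (\<Prod>a\<in>F. v a)) =
     (\<Sum>F\<in>Pow R. g F * mu F * pi F) + (\<Sum>F\<in>Pow R. g (insert f F) * mu (insert f F) * pi F)
     + (\<Sum>F\<in>Pow R. g (insert e F) * mu (insert e F) * pi F)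
     + (\<Sum>F\<in>Pow R. g (insert e (insert f F)) * mu (insert e (insert f F)) * pi F)" for g
  proof -
    have "(\<Sum>F\<in>Pow Ei. g F * mu F * (\<Prod>a\<in>F. v a)) =
      (\<Sum>F\<in>Pow R. g F * mu F * (\<Prod>a\<in>F. v a)) + (\<Sum>F\<in>Pow R. g (insert f F) * mu (insert f F) * (\<Prod>a\<in>insert f F. v a))
     + (\<Sum>F\<in>Pow R. g (insert e F) * mu (insert e F) * (\<Prod>a\<in>insert e F. v a))
     + (\<Sum>F\<in>Pow R. g (insert e (insert f F)) * mu (insert e (insert f F)) * (\<Prod>a\<in>insert e (insert f F). v a))"
      apply (subst Ei) by (rule sum_Pow_insert2[OF finR eR fR f(2)[symmetric]])
    also have "\<dots> = (\<Sum>F\<in>Pow R. g F * mu F * pi F) + (\<Sum>F\<in>Pow R. g (insert f F) * mu (insert f F) * pi F)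
     + (\<Sum>F\<in>Pow R. g (insert e F) * mu (insert e F) * pi F)
     + (\<Sum>F\<in>Pow R. g (insert e (insert f F)) * mu (insert e (insert f F)) * pi F)"
      by (intro arg_cong2[where f="(+)"] sum.cong refl) (simp_all only: piv)
    finally show ?thesis .
  qed
  have ef: "f \<noteq> e" by fact
  have sub: "F \<in> Pow R \<Longrightarrow> e \<notin> F \<and> f \<notin> F" for F using eR fR by auto
  have Nef: "(\<Sum>F\<in>Pow Ei. of_bool (e \<in> F \<and> f \<in> F) * mu F * (\<Prod>a\<in>F. v a)) = cef"
    unfolding N cef_def using ef by (auto simp: sub intro!: sum.neutral)
  have Ne: "(\<Sum>F\<in>Pow Ei. of_bool (e \<in> F) * mu F * (\<Prod>a\<in>F. v a)) = ce + cef"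
    unfolding N cef_def ce_def using ef by (auto simp: sub intro!: sum.neutral)
  have Nf: "(\<Sum>F\<in>Pow Ei. of_bool (f \<in> F) * mu F * (\<Prod>a\<in>F. v a)) = cf + cef"
    unfolding N cef_def cf_def using ef by (auto simp: sub intro!: sum.neutral)
  have NZ: "Zpart mu Ei v = c0 + cf + ce + cef"
    using N[of "\<lambda>_. 1"] unfolding Zpart_def c0_def cf_def ce_def cef_def by simp
  have "Expect mu Ei v (\<lambda>F. of_bool (e \<in> F \<and> f \<in> F))
             \<le> Expect mu Ei v (\<lambda>F. of_bool (e \<in> F)) * Expect mu Ei v (\<lambda>F. of_bool (f \<in> F))"
    using ray[unfolded rayleigh_def, rule_format, OF vpos[rule_format] e f(1) f(2)[symmetric]] .
  then have ineq: "cef / Z \<le> (ce + cef) / Z * ((cf + cef) / Z)" if "Z = c0 + cf + ce + cef" for Z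
    unfolding Expect_eq Nef Ne Nf NZ that .
  have cef: "cef \<ge> 0" unfolding cef_def pi_def
    by (rule sum_mu_nonneg[OF ms]) (use wR0 RE e f in auto)
  define Z where "Z = c0 + cf + ce + cef"
  have Zp: "Z > 0" unfolding Z_def using c0 m0 cf ce cef by linarith
  have "cef / Z * (Z * Z) \<le> (ce + cef) / Z * ((cf + cef) / Z) * (Z * Z)"
    using ineq[OF Z_def] Zp by (intro mult_right_mono) auto
  then have "cef * Z \<le> (ce + cef) * (cf + cef)" using Zp by (simp add: divide_simps)
  then have "cef * c0 + cef * cf + cef * ce + cef * cef \<le> ce * cf + ce * cef + cef * cf + cef * cef"
    unfolding Z_def by (simp add: distrib_left distrib_right)
  then have key: "cef * c0 \<le> ce * cf" by (simp add: mult.commute)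
  have "s * cf \<ge> 0" "s' * cf \<ge> 0" using cf s by auto
  then have d1: "c0 + s * cf > 0" "c0 + s' * cf > 0" using c0 m0 by linarith+
  have "0 \<le> (s' - s) * (ce * cf - cef * c0)" using key s by simp
  then have "(ce + s' * cef) * (c0 + s * cf) - (ce + s * cef) * (c0 + s' * cf) \<le> 0"
    by (simp add: algebra_simps)
  then have "((ce + s' * cef) * (c0 + s * cf) - (ce + s * cef) * (c0 + s' * cf)) / ((c0 + s' * cf) * (c0 + s * cf)) \<le> 0"
    using d1 by (intro divide_nonpos_pos) auto
  then show ?thesis unfolding AB using d1 by (subst frac_le_eq) auto
qed



lemma ratio_cong:
  assumes "\<forall>a\<in>Ei-{e}. w a = w' a"
  shows "cavity_ratio mu Ei e w = cavity_ratio mu Ei e w'"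
proof -
  have "\<And>F. F \<in> Pow (Ei-{e}) \<Longrightarrow> (\<Prod>a\<in>F. w a) = (\<Prod>a\<in>F. w' a)"
    using assms by (intro prod.cong) auto
  then show ?thesis unfolding cavity_ratio_def
    by (metis (no_types, lifting) sum.cong)
qed

lemma anti_pos:
  assumes cm: "cavity_monotone mu Ei" and e: "e \<in> Ei"
    and wpos: "\<forall>a\<in>Ei-{e}. w a > 0" and le: "\<forall>a\<in>Ei-{e}. w a \<le> w' a"
  shows "cavity_ratio mu Ei e w' \<le> cavity_ratio mu Ei e w"
proof -
  have finE: "finite Ei" using cm unfolding cavity_monotone_def measure_on_def by auto
  define mix where "mix S = (\<lambda>a. if a \<in> S then w' a else w a)" for S
  have "cavity_ratio mu Ei e (mix S) \<le> cavity_ratio mu Ei e w" if "S \<subseteq> Ei - {e}" for S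
  proof -
    have "finite S" using that finE finite_subset by blast
    then show ?thesis using that
    proof (induction S rule: finite_subset_induct)
      case empty
      then show ?case by (simp add: mix_def)
    next
      case (insert f S)
      have pos: "\<forall>a\<in>Ei-{e}. mix S a > 0" unfolding mix_def
        proof (intro ballI)
          fix a assume "a \<in> Ei - {e}"
          then show "0 < (if a \<in> S then w' a else w a)" using wpos le
            by (auto intro: less_le_trans)
        qed
      have 1: "mix (insert f S) = (mix S)(f := w' f)" unfolding mix_def by auto
      have 2: "mix S = (mix S)(f := w f)" using insert(3) unfolding mix_def by auto
      have "cavity_ratio mu Ei e ((mix S)(f := w' f)) \<le> cavity_ratio mu Ei e ((mix S)(f := w f))"
        using insert(2) wpos le by (intro coord_mono[OF cm e _ _ pos]) auto
      then have "cavity_ratio mu Ei e (mix (insert f S)) \<le> cavity_ratio mu Ei e (mix S)"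
        using 1 2 by metis
      then show ?case using insert(4) by linarith
    qed
  qed
  from this[of "Ei - {e}"] show ?thesis
    using ratio_cong[of Ei e "mix (Ei - {e})" w' mu] unfolding mix_def by auto
qed



lemma ratio_tendsto:
  assumes cm: "cavity_monotone mu Ei" and e: "e \<in> Ei"
    and w0: "\<forall>a\<in>Ei-{e}. w a \<ge> 0"
    and lim: "\<forall>a\<in>Ei-{e}. ((\<lambda>z. W z a) \<longlongrightarrow> w a) Fl"
  shows "((\<lambda>z. cavity_ratio mu Ei e (W z)) \<longlongrightarrow> cavity_ratio mu Ei e w) Fl"
proof -
  have ms: "measure_on mu Ei" and m0: "mu {} > 0" using cm unfolding cavity_monotone_def by auto
  have B: "(\<Sum>F\<in>Pow (Ei-{e}). mu F * (\<Prod>a\<in>F. w a)) \<ge> mu {}"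
    by (rule Bsum_ge[OF ms]) (use w0 in auto)
  have lp: "((\<lambda>z. \<Prod>a\<in>F. W z a) \<longlongrightarrow> (\<Prod>a\<in>F. w a)) Fl" if "F \<in> Pow (Ei-{e})" for F
    using that lim by (intro tendsto_prod) auto
  show ?thesis unfolding cavity_ratio_def
    apply (rule tendsto_divide)
      apply (rule tendsto_sum, rule tendsto_mult[OF tendsto_const lp], assumption)
     apply (rule tendsto_sum, rule tendsto_mult[OF tendsto_const lp], assumption)
    using B m0 by linarith
qed

lemma anti_nonneg:
  assumes cm: "cavity_monotone mu Ei" and e: "e \<in> Ei"
    and w0: "\<forall>a\<in>Ei-{e}. w a \<ge> 0" and le: "\<forall>a\<in>Ei-{e}. w a \<le> w' a"
  shows "cavity_ratio mu Ei e w' \<le> cavity_ratio mu Ei e w"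
proof -
  have w0': "\<forall>a\<in>Ei-{e}. w' a \<ge> 0" using w0 le by (meson order_trans)
  have l1: "((\<lambda>z. cavity_ratio mu Ei e (\<lambda>a. w a + z)) \<longlongrightarrow> cavity_ratio mu Ei e w) (at_right 0)"
    by (rule ratio_tendsto[OF cm e w0]) (auto intro!: tendsto_eq_intros)
  have l2: "((\<lambda>z. cavity_ratio mu Ei e (\<lambda>a. w' a + z)) \<longlongrightarrow> cavity_ratio mu Ei e w') (at_right 0)"
    by (rule ratio_tendsto[OF cm e w0']) (auto intro!: tendsto_eq_intros)
  have ev: "eventually (\<lambda>z. cavity_ratio mu Ei e (\<lambda>a. w' a + z) \<le> cavity_ratio mu Ei e (\<lambda>a. w a + z)) (at_right 0)"
  proof -
    have "eventually (\<lambda>z::real. z > 0) (at_right 0)" by (simp add: eventually_at_right_less)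
    then show ?thesis
    proof (rule eventually_mono)
      fix z :: real assume "z > 0"
      then show "cavity_ratio mu Ei e (\<lambda>a. w' a + z) \<le> cavity_ratio mu Ei e (\<lambda>a. w a + z)"
        using w0 le by (intro anti_pos[OF cm e]) (auto simp: add_nonneg_pos)
    qed
  qed
  show ?thesis by (rule tendsto_le[OF _ l1 l2 ev]) simp
qed



lemma SI:
  assumes cm: "cavity_monotone mu Ei" and e: "e \<in> Ei"
    and wpos: "\<forall>a\<in>Ei-{e}. w a > 0"
  shows "((\<Sum>F\<in>Pow (Ei-{e}). real (card F) * mu (insert e F) * (\<Prod>a\<in>F. w a))
          + (\<Sum>F\<in>Pow (Ei-{e}). mu (insert e F) * (\<Prod>a\<in>F. w a)))
        * (\<Sum>F\<in>Pow (Ei-{e}). mu F * (\<Prod>a\<in>F. w a))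
       > (\<Sum>F\<in>Pow (Ei-{e}). real (card F) * mu F * (\<Prod>a\<in>F. w a))
         * (\<Sum>F\<in>Pow (Ei-{e}). mu (insert e F) * (\<Prod>a\<in>F. w a))"
proof -
  have ms: "measure_on mu Ei" and m0: "mu {} > 0" and si: "size_increasing mu Ei"
    using cm unfolding cavity_monotone_def by auto
  have finE: "finite Ei" using ms unfolding measure_on_def by auto
  define R where "R = Ei - {e}"
  have finR: "finite R" using finE R_def by auto
  have eR: "e \<notin> R" using R_def by auto
  have Ei: "Ei = insert e R" using R_def e by auto
  have wR0: "\<forall>a\<in>R. w a \<ge> 0" using wpos R_def by (simp add: less_imp_le)
  have RE: "R \<subseteq> Ei" using R_def by auto
  define pi where "pi F = (\<Prod>a\<in>F. w a)" for F
  define A where "A = (\<Sum>F\<in>Pow R. mu (insert e F) * pi F)"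
  define A1 where "A1 = (\<Sum>F\<in>Pow R. real (card F) * mu (insert e F) * pi F)"
  define B where "B = (\<Sum>F\<in>Pow R. mu F * pi F)"
  define B1 where "B1 = (\<Sum>F\<in>Pow R. real (card F) * mu F * pi F)"
  have B: "B \<ge> mu {}" unfolding B_def pi_def
    by (rule Bsum_ge[OF ms]) (use wR0 RE in auto)
  have A: "A \<ge> 0" unfolding A_def pi_def
    by (rule sum_mu_nonneg[OF ms]) (use wR0 RE e in auto)
  have B1: "B1 \<ge> 0" unfolding B1_def pi_def
    using ms wR0 RE unfolding measure_on_def
    by (intro sum_nonneg mult_nonneg_nonneg prod_nonneg) (auto)
  define v where "v = w(e := 1)"
  have vpos: "\<forall>a\<in>Ei. v a > 0" using wpos v_def by auto
  have piv: "(\<Prod>a\<in>F. v a) = pi F" "(\<Prod>a\<in>insert e F. v a) = pi F"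
    if "F \<in> Pow R" for F
  proof -
    have F: "finite F" "e \<notin> F" using that finR eR finite_subset by auto
    have "(\<Prod>a\<in>F. v a) = pi F" unfolding pi_def v_def using F by (intro prod.cong) auto
    then show "(\<Prod>a\<in>F. v a) = pi F" "(\<Prod>a\<in>insert e F. v a) = pi F"
      using F by (auto simp: v_def)
  qed
  have N: "(\<Sum>F\<in>Pow Ei. g F * mu F * (\<Prod>a\<in>F. v a)) =
     (\<Sum>F\<in>Pow R. g F * mu F * pi F) + (\<Sum>F\<in>Pow R. g (insert e F) * mu (insert e F) * pi F)" for g
  proof -
    have "(\<Sum>F\<in>Pow Ei. g F * mu F * (\<Prod>a\<in>F. v a)) =
      (\<Sum>F\<in>Pow R. g F * mu F * (\<Prod>a\<in>F. v a)) + (\<Sum>F\<in>Pow R. g (insert e F) * mu (insert e F) * (\<Prod>a\<in>insert e F. v a))"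
      apply (subst Ei) by (rule sum_Pow_insert[OF finR eR])
    also have "\<dots> = (\<Sum>F\<in>Pow R. g F * mu F * pi F) + (\<Sum>F\<in>Pow R. g (insert e F) * mu (insert e F) * pi F)"
      by (intro arg_cong2[where f="(+)"] sum.cong refl) (simp_all only: piv)
    finally show ?thesis .
  qed
  have sub: "F \<in> Pow R \<Longrightarrow> e \<notin> F \<and> finite F" for F using eR finR finite_subset by auto
  have N1: "(\<Sum>F\<in>Pow Ei. (real (card F) * of_bool (e \<in> F)) * mu F * (\<Prod>a\<in>F. v a)) = A1 + A"
    unfolding N A_def A1_def sum.distrib[symmetric]
    by (auto simp: sub algebra_simps intro!: sum.cong)
  have N2: "(\<Sum>F\<in>Pow Ei. real (card F) * mu F * (\<Prod>a\<in>F. v a)) = B1 + (A1 + A)"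
    unfolding N A_def A1_def B1_def sum.distrib[symmetric]
    by (auto simp: sub algebra_simps intro!: sum.cong)
  have N3: "(\<Sum>F\<in>Pow Ei. of_bool (e \<in> F) * mu F * (\<Prod>a\<in>F. v a)) = A"
    unfolding N A_def by (auto simp: sub intro!: sum.neutral)
  have NZ: "Zpart mu Ei v = B + A"
    using N[of "\<lambda>_. 1"] unfolding Zpart_def A_def B_def by simp
  have "Expect mu Ei v (\<lambda>F. real (card F) * of_bool (e \<in> F))
             > Expect mu Ei v (\<lambda>F. real (card F)) * Expect mu Ei v (\<lambda>F. of_bool (e \<in> F))"
    using si[unfolded size_increasing_def, rule_format, OF vpos[rule_format] e] .
  then have ineq: "(A1 + A) / Z > (B1 + (A1 + A)) / Z * (A / Z)" if "Z = B + A" for Z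
    unfolding Expect_eq N1 N2 N3 NZ that .
  define Z where "Z = B + A"
  have Zp: "Z > 0" unfolding Z_def using B m0 A by linarith
  have "(A1 + A) / Z * (Z * Z) > (B1 + (A1 + A)) / Z * (A / Z) * (Z * Z)"
    using ineq[OF Z_def] Zp by (intro mult_strict_right_mono) auto
  then have "(A1 + A) * Z > (B1 + (A1 + A)) * A" using Zp by (simp add: divide_simps)
  then have "(A1 + A) * B + (A1 + A) * A > B1 * A + (A1 + A) * A"
    unfolding Z_def by (simp add: distrib_left distrib_right)
  then show ?thesis unfolding A_def A1_def B_def B1_def pi_def R_def by simp
qed



lemma Apos:
  assumes cm: "cavity_monotone mu Ei" and e: "e \<in> Ei"
    and wpos: "\<forall>a\<in>Ei-{e}. w a > 0"
  shows "(\<Sum>F\<in>Pow (Ei-{e}). mu (insert e F) * (\<Prod>a\<in>F. w a)) > 0"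
proof -
  have ms: "measure_on mu Ei" and m0: "mu {} > 0" using cm unfolding cavity_monotone_def by auto
  have finE: "finite Ei" using ms unfolding measure_on_def by auto
  define R where "R = Ei - {e}"
  have w0: "\<forall>a\<in>R. w a \<ge> 0" using wpos R_def by (simp add: less_imp_le)
  have RE: "R \<subseteq> Ei" using R_def by auto
  have finR: "finite R" using finE RE finite_subset by auto
  define A where "A = (\<Sum>F\<in>Pow R. mu (insert e F) * (\<Prod>a\<in>F. w a))"
  define A1 where "A1 = (\<Sum>F\<in>Pow R. real (card F) * mu (insert e F) * (\<Prod>a\<in>F. w a))"
  define B where "B = (\<Sum>F\<in>Pow R. mu F * (\<Prod>a\<in>F. w a))"
  define B1 where "B1 = (\<Sum>F\<in>Pow R. real (card F) * mu F * (\<Prod>a\<in>F. w a))"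
  have si: "(A1 + A) * B > B1 * A" using SI[OF cm e wpos] unfolding A_def A1_def B_def B1_def R_def .
  have B: "B \<ge> mu {}" unfolding B_def
    by (rule Bsum_ge[OF ms]) (use w0 RE in auto)
  have A: "A \<ge> 0" unfolding A_def
    by (rule sum_mu_nonneg[OF ms]) (use w0 RE e in auto)
  have B1: "B1 \<ge> 0" unfolding B1_def
    using ms w0 RE unfolding measure_on_def
    by (intro sum_nonneg mult_nonneg_nonneg prod_nonneg) (auto)
  have "(A1 + A) * B > 0" using si B1 A by (smt (verit) mult_nonneg_nonneg)
  then have s: "A1 + A > 0" using B m0 by (smt (verit) mult_nonpos_nonneg)
  have "A1 \<le> (\<Sum>F\<in>Pow R. real (card R) * (mu (insert e F) * (\<Prod>a\<in>F. w a)))"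
    unfolding A1_def
  proof (rule sum_mono)
    fix F assume F: "F \<in> Pow R"
    then have "card F \<le> card R" using finR by (simp add: card_mono)
    moreover have "mu (insert e F) * (\<Prod>a\<in>F. w a) \<ge> 0"
      using F ms w0 RE e unfolding measure_on_def by (intro mult_nonneg_nonneg prod_nonneg) auto
    ultimately show "real (card F) * mu (insert e F) * (\<Prod>a\<in>F. w a) \<le> real (card R) * (mu (insert e F) * (\<Prod>a\<in>F. w a))"
      by (simp add: mult.assoc mult_right_mono)
  qed
  then have "A1 \<le> real (card R) * A" unfolding A_def by (simp add: sum_distrib_left)
  then have "(real (card R) + 1) * A > 0" using s by (simp add: algebra_simps)
  then have "A > 0" by (simp add: zero_less_mult_iff)
  then show ?thesis unfolding A_def R_def .
qed

lemma ratio_pos: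
  assumes cm: "cavity_monotone mu Ei" and e: "e \<in> Ei"
    and w0: "\<forall>a\<in>Ei-{e}. w a \<ge> 0"
  shows "cavity_ratio mu Ei e w > 0"
proof -
  have ms: "measure_on mu Ei" and m0: "mu {} > 0" using cm unfolding cavity_monotone_def by auto
  define w' where "w' a = w a + 1" for a
  have wp: "\<forall>a\<in>Ei-{e}. w' a > 0" using w0 unfolding w'_def by (simp add: add_nonneg_pos)
  have "cavity_ratio mu Ei e w' \<le> cavity_ratio mu Ei e w"
    by (rule anti_nonneg[OF cm e w0]) (auto simp: w'_def)
  moreover have "cavity_ratio mu Ei e w' > 0"
  proof -
    have "(\<Sum>F\<in>Pow (Ei-{e}). mu F * (\<Prod>a\<in>F. w' a)) \<ge> mu {}"
      by (rule Bsum_ge[OF ms]) (use wp in \<open>auto simp: less_imp_le\<close>)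
    then show ?thesis unfolding cavity_ratio_def using Apos[OF cm e wp] m0
      by (simp add: divide_pos_pos)
  qed
  ultimately show ?thesis by linarith
qed



lemma pow_card_aux: "real n * c * (x ^ n * p) = x * (c * p * (real n * x ^ (n - Suc 0)))"
  by (cases n) (simp_all add: algebra_simps)

lemma homog_strict:
  assumes cm: "cavity_monotone mu Ei" and e: "e \<in> Ei"
    and wpos: "\<forall>a\<in>Ei-{e}. w a > 0" and lam: "lam > 1"
  shows "lam * cavity_ratio mu Ei e (\<lambda>a. lam * w a) > cavity_ratio mu Ei e w"
proof -
  have ms: "measure_on mu Ei" and m0: "mu {} > 0" using cm unfolding cavity_monotone_def by auto
  have finE: "finite Ei" using ms unfolding measure_on_def by auto
  define R where "R = Ei - {e}"
  have w0: "\<forall>a\<in>R. w a \<ge> 0" using wpos R_def by (simp add: less_imp_le)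
  have RE: "R \<subseteq> Ei" using R_def by auto
  have finR: "finite R" using finE RE finite_subset by auto
  define pi where "pi F = (\<Prod>a\<in>F. w a)" for F
  define Ap where "Ap x = (\<Sum>F\<in>Pow R. mu (insert e F) * pi F * x ^ card F)" for x :: real
  define Bp where "Bp x = (\<Sum>F\<in>Pow R. mu F * pi F * x ^ card F)" for x :: real
  define Ap' where "Ap' x = (\<Sum>F\<in>Pow R. mu (insert e F) * pi F * (real (card F) * x ^ (card F - Suc 0)))" for x :: real
  define Bp' where "Bp' x = (\<Sum>F\<in>Pow R. mu F * pi F * (real (card F) * x ^ (card F - Suc 0)))" for x :: real
  have prodx: "(\<Prod>a\<in>F. x * w a) = x ^ card F * pi F" if "F \<in> Pow R" for F x
    unfolding pi_def by (simp add: prod.distrib)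
  have rat: "cavity_ratio mu Ei e (\<lambda>a. x * w a) = Ap x / Bp x" for x
    unfolding cavity_ratio_def Ap_def Bp_def R_def[symmetric]
    by (intro arg_cong2[where f="(/)"] sum.cong refl) (auto simp: prodx mult_ac)
  have dA: "(Ap has_real_derivative Ap' x) (at x)" for x
    unfolding Ap_def Ap'_def by (auto intro!: derivative_eq_intros DERIV_pow sum.cong simp: mult_ac)
  have dB: "(Bp has_real_derivative Bp' x) (at x)" for x
    unfolding Bp_def Bp'_def by (auto intro!: derivative_eq_intros DERIV_pow sum.cong simp: mult_ac)
  define h where "h x = x * Ap x / Bp x" for x
  have Bpos: "Bp x > 0" if "x > 0" for x
  proof -
    have "(\<Sum>F\<in>Pow R. mu F * (\<Prod>a\<in>F. x * w a)) \<ge> mu {}"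
      by (rule Bsum_ge[OF ms RE]) (use w0 that in auto)
    moreover have "(\<Sum>F\<in>Pow R. mu F * (\<Prod>a\<in>F. x * w a)) = Bp x"
      unfolding Bp_def by (intro sum.cong refl) (auto simp: prodx mult_ac)
    ultimately show ?thesis using m0 by linarith
  qed
  have "h 1 < h lam"
  proof (rule DERIV_pos_imp_increasing[OF lam])
    fix x :: real assume x: "1 \<le> x" "x \<le> lam"
    then have xp: "x > 0" by linarith
    have d: "(h has_real_derivative ((x * Ap' x + 1 * Ap x) * Bp x - x * Ap x * Bp' x) / (Bp x * Bp x)) (at x)"
      unfolding h_def
      by (rule DERIV_divide[OF DERIV_mult'[OF DERIV_ident dA] dB]) (use Bpos[OF xp] in auto)
    have wx: "\<forall>a\<in>Ei-{e}. x * w a > 0" using wpos xp by auto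
    have si: "((\<Sum>F\<in>Pow R. real (card F) * mu (insert e F) * (\<Prod>a\<in>F. x * w a))
          + (\<Sum>F\<in>Pow R. mu (insert e F) * (\<Prod>a\<in>F. x * w a)))
        * (\<Sum>F\<in>Pow R. mu F * (\<Prod>a\<in>F. x * w a))
       > (\<Sum>F\<in>Pow R. real (card F) * mu F * (\<Prod>a\<in>F. x * w a))
         * (\<Sum>F\<in>Pow R. mu (insert e F) * (\<Prod>a\<in>F. x * w a))"
      using SI[OF cm e wx] unfolding R_def .
    have e1: "(\<Sum>F\<in>Pow R. real (card F) * mu (insert e F) * (\<Prod>a\<in>F. x * w a)) = x * Ap' x"
      unfolding Ap'_def sum_distrib_left
      by (intro sum.cong refl) (simp add: prodx pow_card_aux)
    have e2: "(\<Sum>F\<in>Pow R. real (card F) * mu F * (\<Prod>a\<in>F. x * w a)) = x * Bp' x"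
      unfolding Bp'_def sum_distrib_left
      by (intro sum.cong refl) (simp add: prodx pow_card_aux)
    have e3: "(\<Sum>F\<in>Pow R. mu (insert e F) * (\<Prod>a\<in>F. x * w a)) = Ap x"
      unfolding Ap_def by (intro sum.cong refl) (auto simp: prodx mult_ac)
    have e4: "(\<Sum>F\<in>Pow R. mu F * (\<Prod>a\<in>F. x * w a)) = Bp x"
      unfolding Bp_def by (intro sum.cong refl) (auto simp: prodx mult_ac)
    have "(x * Ap' x + Ap x) * Bp x > x * Bp' x * Ap x" using si unfolding e1 e2 e3 e4 .
    then have "((x * Ap' x + 1 * Ap x) * Bp x - x * Ap x * Bp' x) / (Bp x * Bp x) > 0"
      using Bpos[OF xp] by (intro divide_pos_pos) (auto simp: mult_ac)
    then show "\<exists>y. (h has_real_derivative y) (at x) \<and> y > 0" using d by blast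
  qed
  moreover have "h 1 = cavity_ratio mu Ei e w" unfolding h_def using rat[of 1] by simp
  moreover have "h lam = lam * cavity_ratio mu Ei e (\<lambda>a. lam * w a)" unfolding h_def rat by simp
  ultimately show ?thesis by simp
qed



lemma other_end_eq:
  assumes "i \<noteq> k" shows "other_end i {i, k} = k"
  unfolding other_end_def
proof (rule the_equality)
  fix k' assume "{i, k} = {i, k'}"
  then show "k' = k" using assms by (metis doubleton_eq_iff)
qed simp

lemma incident_arc:
  assumes g: "finite_simple_graph V E" and ed: "ed \<in> incident E i"
  shows "(other_end i ed, i) \<in> arcs E"
proof -
  have "ed \<in> E" "i \<in> ed" using ed unfolding incident_def by auto
  then obtain a b where ab: "a \<noteq> b" "ed = {a, b}" using g unfolding finite_simple_graph_def by meson
  define k where "k = (if a = i then b else a)"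
  have "ed = {i, k}" "i \<noteq> k" using ab \<open>i \<in> ed\<close> unfolding k_def by auto
  then have "other_end i ed = k" using other_end_eq by simp
  then show ?thesis using \<open>ed \<in> E\<close> \<open>ed = {i, k}\<close> unfolding arcs_def by (simp add: insert_commute)
qed

lemma arc_props:
  assumes g: "finite_simple_graph V E" and a: "(i, j) \<in> arcs E"
  shows "i \<in> V" "{i, j} \<in> incident E i"
proof -
  have "{i, j} \<in> E" using a unfolding arcs_def by auto
  then obtain a b where ab: "a \<in> V" "b \<in> V" "{i, j} = {a, b}"
    using g unfolding finite_simple_graph_def by meson
  have "i \<in> {a, b}" using ab(3) by (metis insertI1)
  then show "i \<in> V" using ab by auto
  show "{i, j} \<in> incident E i" using \<open>{i, j} \<in> E\<close> unfolding incident_def by auto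
qed

lemma finite_arcs:
  assumes g: "finite_simple_graph V E" shows "finite (arcs E)"
proof -
  have "arcs E \<subseteq> V \<times> V"
  proof
    fix p assume "p \<in> arcs E"
    then obtain i j where p: "p = (i, j)" "{i, j} \<in> E" unfolding arcs_def by auto
    then obtain a b where ab: "a \<in> V" "b \<in> V" "{i, j} = {a, b}"
      using g unfolding finite_simple_graph_def by meson
    have "i \<in> {a, b}" "j \<in> {a, b}" using ab(3) by (metis insertI1, metis insertI1 insert_commute)
    then show "p \<in> V \<times> V" using p ab by auto
  qed
  moreover have "finite V" using g unfolding finite_simple_graph_def by auto
  ultimately show ?thesis by (meson finite_SigmaI finite_subset)
qed

definition Wt :: "('v \<times> 'v \<Rightarrow> real) \<Rightarrow> 'v \<Rightarrow> 'v set \<Rightarrow> real" where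
  "Wt x i = (\<lambda>ed. x (other_end i ed, i))"

lemma T_arc:
  "(i, j) \<in> arcs E \<Longrightarrow> scaled_cavity_op t E mu x (i, j) = t * cavity_ratio (mu i) (incident E i) {i, j} (Wt x i)"
  unfolding scaled_cavity_op_def cavity_op_def Wt_def by simp

lemma T_off:
  "a \<notin> arcs E \<Longrightarrow> scaled_cavity_op t E mu x a = 0"
  unfolding scaled_cavity_op_def cavity_op_def by (cases a) simp

locale net =
  fixes V :: "'v set" and E :: "'v set set" and mu :: "'v \<Rightarrow> 'v set set \<Rightarrow> real" and t :: real
  assumes g: "finite_simple_graph V E"
    and cm: "\<forall>i\<in>V. cavity_monotone (mu i) (incident E i)"
    and t: "t > 0"
begin

abbreviation "T \<equiv> scaled_cavity_op t E mu"

lemma Wt_nonneg: "x \<in> configs E \<Longrightarrow> \<forall>a\<in>incident E i - {e}. Wt x i a \<ge> 0"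
  unfolding configs_def Wt_def using incident_arc[OF g] by auto

lemma Wt_pos: "x \<in> configs E \<Longrightarrow> \<forall>a\<in>arcs E. x a > 0 \<Longrightarrow> \<forall>a\<in>incident E i - {e}. Wt x i a > 0"
  unfolding Wt_def using incident_arc[OF g] by auto

lemma T_configs: assumes "x \<in> configs E" shows "T x \<in> configs E" and "\<forall>a\<in>arcs E. T x a > 0"
proof -
  have pos: "T x a > 0" if a: "a \<in> arcs E" for a
  proof -
    obtain i j where ij: "a = (i, j)" by fastforce
    have "cavity_ratio (mu i) (incident E i) {i, j} (Wt x i) > 0"
      by (rule ratio_pos[OF cm[rule_format, OF arc_props(1)[OF g a[unfolded ij]]] arc_props(2)[OF g a[unfolded ij]] Wt_nonneg[OF assms]])
    then show ?thesis using T_arc[OF a[unfolded ij]] t ij by simp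
  qed
  then show "\<forall>a\<in>arcs E. T x a > 0" by blast
  show "T x \<in> configs E" unfolding configs_def using pos T_off by (auto simp: less_imp_le)
qed

lemma T_anti:
  assumes "x \<in> configs E" "y \<in> configs E" "\<forall>a\<in>arcs E. x a \<le> y a"
  shows "T y a \<le> T x a"
proof (cases "a \<in> arcs E")
  case a: True
  obtain i j where ij: "a = (i, j)" by fastforce
  have le: "\<forall>b\<in>incident E i - {{i,j}}. Wt x i b \<le> Wt y i b"
    unfolding Wt_def using incident_arc[OF g] assms(3) by auto
  have "cavity_ratio (mu i) (incident E i) {i, j} (Wt y i) \<le> cavity_ratio (mu i) (incident E i) {i, j} (Wt x i)"
    by (rule anti_nonneg[OF cm[rule_format, OF arc_props(1)[OF g a[unfolded ij]]] arc_props(2)[OF g a[unfolded ij]] Wt_nonneg[OF assms(1)] le])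
  then show ?thesis using T_arc[OF a[unfolded ij]] t ij by simp
next
  case False
  then show ?thesis by (simp add: T_off)
qed

lemma T_homog:
  assumes "x \<in> configs E" "\<forall>a\<in>arcs E. x a > 0" "lam > 1" "a \<in> arcs E"
  shows "lam * T (\<lambda>b. lam * x b) a > T x a"
proof -
  obtain i j where ij: "a = (i, j)" by fastforce
  have a: "(i, j) \<in> arcs E" using assms(4) ij by simp
  have "lam * cavity_ratio (mu i) (incident E i) {i, j} (\<lambda>b. lam * Wt x i b) > cavity_ratio (mu i) (incident E i) {i, j} (Wt x i)"
    by (rule homog_strict[OF cm[rule_format, OF arc_props(1)[OF g a]] arc_props(2)[OF g a] Wt_pos[OF assms(1,2)] assms(3)])
  moreover have "Wt (\<lambda>b. lam * x b) i = (\<lambda>b. lam * Wt x i b)" unfolding Wt_def by simp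
  ultimately show ?thesis using T_arc[OF a] t ij by simp
qed

lemma T_cont:
  assumes "x \<in> configs E" "\<forall>a. (\<lambda>k. xs k a) \<longlonglongrightarrow> x a"
  shows "(\<lambda>k. T (xs k) a) \<longlonglongrightarrow> T x a"
proof (cases "a \<in> arcs E")
  case a: True
  obtain i j where ij: "a = (i, j)" by fastforce
  have lim: "\<forall>b\<in>incident E i - {{i,j}}. (\<lambda>k. Wt (xs k) i b) \<longlonglongrightarrow> Wt x i b"
    unfolding Wt_def using assms(2) by auto
  have "(\<lambda>k. cavity_ratio (mu i) (incident E i) {i, j} (Wt (xs k) i)) \<longlonglongrightarrow> cavity_ratio (mu i) (incident E i) {i, j} (Wt x i)"
    by (rule ratio_tendsto[OF cm[rule_format, OF arc_props(1)[OF g a[unfolded ij]]] arc_props(2)[OF g a[unfolded ij]] Wt_nonneg[OF assms(1)] lim])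
  then show ?thesis using T_arc[OF a[unfolded ij]] ij by (simp add: tendsto_mult_left)
next
  case False
  then show ?thesis by (simp add: T_off)
qed

end



context net begin

lemma iter_configs: "x \<in> configs E \<Longrightarrow> (T ^^ n) x \<in> configs E"
  by (induction n) (auto intro: T_configs)

lemma zero_configs: "(\<lambda>_. 0) \<in> configs E"
  unfolding configs_def by auto

lemma configs_nonneg: "x \<in> configs E \<Longrightarrow> x a \<ge> 0"
  unfolding configs_def by (cases "a \<in> arcs E") (simp_all del: split_paired_All)

lemma configs_off: "x \<in> configs E \<Longrightarrow> a \<notin> arcs E \<Longrightarrow> x a = 0"
  unfolding configs_def by (simp del: split_paired_All)

lemma iter_mono:
  assumes "x \<in> configs E" "y \<in> configs E" "\<forall>a. x a \<le> y a"
  shows "(even n \<longrightarrow> (\<forall>a. (T ^^ n) x a \<le> (T ^^ n) y a)) \<and> (odd n \<longrightarrow> (\<forall>a. (T ^^ n) y a \<le> (T ^^ n) x a))"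
proof (induction n)
  case 0
  then show ?case using assms by simp
next
  case (Suc n)
  have cx: "(T ^^ n) x \<in> configs E" and cy: "(T ^^ n) y \<in> configs E"
    using iter_configs assms by auto
  show ?case
  proof (cases "even n")
    case True
    then have "\<forall>a. (T ^^ n) x a \<le> (T ^^ n) y a" using Suc by simp
    then have "\<forall>a. T ((T ^^ n) y) a \<le> T ((T ^^ n) x) a" using T_anti[OF cx cy] by blast
    then show ?thesis using True by simp
  next
    case False
    then have "\<forall>a. (T ^^ n) y a \<le> (T ^^ n) x a" using Suc by simp
    then have "\<forall>a. T ((T ^^ n) x) a \<le> T ((T ^^ n) y) a" using T_anti[OF cy cx] by blast
    then show ?thesis using False by simp
  qed
qed

definition z :: "nat \<Rightarrow> 'v \<times> 'v \<Rightarrow> real" where "z n = (T ^^ n) (\<lambda>_. 0)"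

lemma z_configs: "z n \<in> configs E" unfolding z_def by (rule iter_configs[OF zero_configs])

lemma bracket:
  assumes y: "y \<in> configs E" and m: "m \<ge> 2 * k + 1"
  shows "z (2 * k) a \<le> (T ^^ m) y a \<and> (T ^^ m) y a \<le> z (2 * k + 1) a"
proof -
  have u: "(T ^^ (m - 2 * k)) y \<in> configs E" "(T ^^ (m - (2 * k + 1))) y \<in> configs E"
    using iter_configs[OF y] by auto
  have le0: "\<forall>a. (\<lambda>_. 0) a \<le> u a" if "u \<in> configs E" for u using configs_nonneg[OF that] by simp
  have "(T ^^ (2 * k)) (\<lambda>_. 0) a \<le> (T ^^ (2 * k)) ((T ^^ (m - 2 * k)) y) a"
    using conjunct1[OF iter_mono[OF zero_configs u(1) le0[OF u(1)], of "2 * k"]] by (simp del: split_paired_All)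
  moreover have "(T ^^ (2 * k)) ((T ^^ (m - 2 * k)) y) = (T ^^ m) y"
  proof -
    have "(T ^^ m) y = (T ^^ (2 * k + (m - 2 * k))) y" using m by simp
    also have "\<dots> = (T ^^ (2 * k)) ((T ^^ (m - 2 * k)) y)" by (simp only: funpow_add o_apply)
    finally show ?thesis by simp
  qed
  moreover have "(T ^^ (2 * k + 1)) ((T ^^ (m - (2 * k + 1))) y) a \<le> (T ^^ (2 * k + 1)) (\<lambda>_. 0) a"
    using conjunct2[OF iter_mono[OF zero_configs u(2) le0[OF u(2)], of "2 * k + 1"]] by (simp del: split_paired_All)
  moreover have "(T ^^ (2 * k + 1)) ((T ^^ (m - (2 * k + 1))) y) = (T ^^ m) y"
  proof -
    have "(T ^^ m) y = (T ^^ ((2 * k + 1) + (m - (2 * k + 1)))) y" using m by simp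
    also have "\<dots> = (T ^^ (2 * k + 1)) ((T ^^ (m - (2 * k + 1))) y)" by (simp only: funpow_add o_apply)
    finally show ?thesis by simp
  qed
  ultimately show ?thesis unfolding z_def by simp
qed

end



context net begin

lemma z_Suc: "z (Suc n) = T (z n)" unfolding z_def by simp

lemma z_bracket: "m \<ge> 2 * k + 1 \<Longrightarrow> z (2 * k) a \<le> z m a \<and> z m a \<le> z (2 * k + 1) a"
  using bracket[OF zero_configs] unfolding z_def by blast

lemma z_even_le_odd: "z (2 * k) a \<le> z (2 * k + 1) a" using z_bracket[of k "2 * k + 1"] by simp
lemma z_even_inc: "z (2 * k) a \<le> z (2 * Suc k) a" using z_bracket[of k "2 * Suc k"] by simp
lemma z_odd_dec: "z (2 * Suc k + 1) a \<le> z (2 * k + 1) a" using z_bracket[of k "2 * Suc k + 1"] by simp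
lemma z_odd_le1: "z (2 * k + 1) a \<le> z 1 a"
proof (induction k)
  case (Suc k) then show ?case using z_odd_dec[of k a] by linarith
qed simp

definition lo :: "'v \<times> 'v \<Rightarrow> real" where "lo a = lim (\<lambda>k. z (2 * k) a)"
definition hi :: "'v \<times> 'v \<Rightarrow> real" where "hi a = lim (\<lambda>k. z (2 * k + 1) a)"

lemma lo_inc: "incseq (\<lambda>k. z (2 * k) a)" by (rule incseq_SucI) (rule z_even_inc)
lemma hi_dec: "decseq (\<lambda>k. z (2 * k + 1) a)" by (rule decseq_SucI) (rule z_odd_dec)

lemma lo_lim: "(\<lambda>k. z (2 * k) a) \<longlonglongrightarrow> lo a"
proof -
  have "z (2 * k) a \<le> z 1 a" for k using z_even_le_odd[of k a] z_odd_le1[of k a] by linarith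
  then have "\<forall>k. z (2 * k) a \<le> z 1 a" by blast
  then obtain L where "(\<lambda>k. z (2 * k) a) \<longlonglongrightarrow> L" using incseq_convergent[OF lo_inc] by blast
  then show ?thesis unfolding lo_def by (simp add: limI)
qed

lemma hi_lim: "(\<lambda>k. z (2 * k + 1) a) \<longlonglongrightarrow> hi a"
proof -
  have "\<forall>k. 0 \<le> z (2 * k + 1) a" using configs_nonneg[OF z_configs] by blast
  then obtain L where "(\<lambda>k. z (2 * k + 1) a) \<longlonglongrightarrow> L" using decseq_convergent[OF hi_dec] by blast
  then show ?thesis unfolding hi_def by (simp add: limI)
qed

lemma lo_configs: "lo \<in> configs E"
proof -
  have "lo a \<ge> 0" for a
    by (rule LIMSEQ_le_const[OF lo_lim]) (intro exI[of _ 0] allI impI configs_nonneg[OF z_configs])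
  moreover have "lo a = 0" if "a \<notin> arcs E" for a
  proof -
    have "(\<lambda>k. z (2 * k) a) = (\<lambda>k. 0)" using configs_off[OF z_configs that] by simp
    then show ?thesis using lo_lim[of a] by (simp add: LIMSEQ_const_iff)
  qed
  ultimately show ?thesis unfolding configs_def by auto
qed

lemma hi_configs: "hi \<in> configs E"
proof -
  have "hi a \<ge> 0" for a
    by (rule LIMSEQ_le_const[OF hi_lim]) (intro exI[of _ 0] allI impI configs_nonneg[OF z_configs])
  moreover have "hi a = 0" if "a \<notin> arcs E" for a
  proof -
    have "(\<lambda>k. z (2 * k + 1) a) = (\<lambda>k. 0)" using configs_off[OF z_configs that] by simp
    then show ?thesis using hi_lim[of a] by (simp add: LIMSEQ_const_iff)
  qed
  ultimately show ?thesis unfolding configs_def by auto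
qed

lemma lo_pos: "a \<in> arcs E \<Longrightarrow> lo a > 0"
proof -
  assume a: "a \<in> arcs E"
  have "z 2 a > 0" using T_configs(2)[OF z_configs[of 1]] a z_Suc[of 1] by (simp add: numeral_2_eq_2)
  moreover have "z (2 * 1) a \<le> lo a" using incseq_le[OF lo_inc lo_lim] .
  ultimately show ?thesis by simp
qed

lemma hi_eq: "hi = T lo"
proof
  fix a
  have "(\<lambda>k. T (z (2 * k)) a) \<longlonglongrightarrow> T lo a"
    by (rule T_cont[OF lo_configs]) (intro allI lo_lim)
  moreover have "(\<lambda>k. T (z (2 * k)) a) = (\<lambda>k. z (2 * k + 1) a)" using z_Suc by simp
  ultimately show "hi a = T lo a" using hi_lim LIMSEQ_unique by metis
qed

lemma lo_eq: "lo = T hi"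
proof
  fix a
  have "(\<lambda>k. T (z (2 * k + 1)) a) \<longlonglongrightarrow> T hi a"
    by (rule T_cont[OF hi_configs]) (intro allI hi_lim)
  moreover have "(\<lambda>k. T (z (2 * k + 1)) a) = (\<lambda>k. z (2 * Suc k) a)" using z_Suc by simp
  moreover have "(\<lambda>k. z (2 * Suc k) a) \<longlonglongrightarrow> lo a" using LIMSEQ_Suc[OF lo_lim] .
  ultimately show "lo a = T hi a" using LIMSEQ_unique by metis
qed

lemma lo_le_hi: "lo a \<le> hi a"
  by (rule LIMSEQ_le[OF lo_lim hi_lim]) (intro exI[of _ 0] allI impI z_even_le_odd)

lemma hi_le_lo: "hi a \<le> lo a"
proof (cases "a \<in> arcs E")
  case False
  then show ?thesis using configs_off[OF lo_configs] configs_off[OF hi_configs] by simp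
next
  case aD: True
  define D where "D = arcs E"
  have finD: "finite D" unfolding D_def by (rule finite_arcs[OF g])
  define lam where "lam = Max (insert 1 ((\<lambda>b. hi b / lo b) ` D))"
  have lam1: "lam \<ge> 1" unfolding lam_def using finD by simp
  have hb: "hi b \<le> lam * lo b" if "b \<in> D" for b
  proof -
    have "hi b / lo b \<le> lam" unfolding lam_def using finD that by simp
    then show ?thesis using lo_pos[of b] that unfolding D_def by (simp add: divide_le_eq mult.commute)
  qed
  have "lam \<le> 1"
  proof (rule ccontr)
    assume "\<not> lam \<le> 1"
    then have lg: "lam > 1" by simp
    have "lam \<in> insert 1 ((\<lambda>b. hi b / lo b) ` D)" unfolding lam_def using finD by (intro Max_in) auto
    then obtain a0 where a0: "a0 \<in> D" "lam = hi a0 / lo a0" using lg by auto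
    then have ha0: "hi a0 = lam * lo a0" using lo_pos[of a0] unfolding D_def by simp
    define y where "y b = lam * lo b" for b
    have yc: "y \<in> configs E" using lo_configs lg unfolding configs_def y_def by auto
    have "\<forall>b\<in>arcs E. hi b \<le> y b" using hb unfolding y_def D_def by auto
    then have "T y a0 \<le> T hi a0" using T_anti[OF hi_configs yc] by blast
    then have "T y a0 \<le> lo a0" using lo_eq by simp
    moreover have "lam * T y a0 > T lo a0"
      using T_homog[OF lo_configs _ lg] lo_pos a0(1) unfolding y_def D_def by blast
    moreover have "T lo a0 = hi a0" using hi_eq by simp
    ultimately have "lam * lo a0 > lam * lo a0" using ha0 lg
      by (smt (verit) mult_left_mono)
    then show False by simp
  qed
  then have "lam * lo a \<le> 1 * lo a" using lo_pos[OF aD] by (intro mult_right_mono) auto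
  then show ?thesis using hb[of a] aD unfolding D_def by linarith
qed

lemma lo_hi: "lo = hi" using lo_le_hi hi_le_lo by (intro ext antisym)

lemma fixed: "lo = T lo" using hi_eq lo_hi by simp

lemma conv:
  assumes y: "y \<in> configs E"
  shows "(\<lambda>m. (T ^^ m) y a) \<longlonglongrightarrow> lo a"
proof (rule LIMSEQ_I)
  fix r :: real assume r: "r > 0"
  obtain k1 where k1: "\<forall>k\<ge>k1. norm (z (2 * k) a - lo a) < r" using LIMSEQ_D[OF lo_lim r] by blast
  obtain k2 where k2: "\<forall>k\<ge>k2. norm (z (2 * k + 1) a - lo a) < r" using LIMSEQ_D[OF hi_lim r] lo_hi by metis
  define k where "k = max k1 k2"
  show "\<exists>no. \<forall>m\<ge>no. norm ((T ^^ m) y a - lo a) < r"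
  proof (intro exI allI impI)
    fix m assume m: "m \<ge> 2 * k + 1"
    have b: "z (2 * k) a \<le> (T ^^ m) y a \<and> (T ^^ m) y a \<le> z (2 * k + 1) a"
      using bracket[OF y m] .
    have "norm (z (2 * k) a - lo a) < r" "norm (z (2 * k + 1) a - lo a) < r"
      using k1 k2 unfolding k_def by auto
    then show "norm ((T ^^ m) y a - lo a) < r" using b by auto
  qed
qed

lemma unique:
  assumes y: "y \<in> configs E" "y = T y"
  shows "y = lo"
proof
  fix a
  have "(T ^^ m) y = y" for m by (induction m) (use y in auto)
  then have "(\<lambda>m. y a) \<longlonglongrightarrow> lo a" using conv[OF y(1), of a] by simp
  then show "y a = lo a" using LIMSEQ_unique tendsto_const by blast
qed

end

theorem mainTheorem4:
  fixes V :: "'v set" and E :: "'v set set" and mu :: "'v \<Rightarrow> 'v set set \<Rightarrow> real" and t :: real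
  assumes "finite_simple_graph V E"
    and "\<forall>i\<in>V. cavity_monotone (mu i) (incident E i)"
    and "t > 0"
  shows "\<exists>x. x \<in> configs E \<and> x = scaled_cavity_op t E mu x
           \<and> (\<forall>y\<in>configs E. y = scaled_cavity_op t E mu y \<longrightarrow> y = x)
           \<and> (\<forall>x0\<in>configs E. \<forall>a.
                (\<lambda>k. ((scaled_cavity_op t E mu) ^^ k) x0 a) \<longlonglongrightarrow> x a)"
proof -
  interpret net V E mu t using assms by unfold_locales
  show ?thesis
    using lo_configs fixed unique conv by blast
qed


end
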